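(* Let $p\in\Delta_7$ be strictly positive and suppose that one of the six slice determinants $d_{i,j}(p)$ ($i\in\{1,2,3\}$, $j\in\{0,1\}$) vanishes. Then $p\in\operatorname{RBM}_{3,2}$ and $p\in\mathcal{M}_{3,3}$.
   Context: A distribution of three binary random variables is a $2\times2\times2$ tensor $p=(p_{ijk})_{i,j,k\in\{0,1\}}$ with nonnegative entries summing to $1$; the set of these is $\Delta_7$. For $a,b,c\in\mathbb{R}^2_{\ge0}$, $a\otimes b\otimes c$ is the tensor with entries $a_ib_jc_k$. $\mathcal{M}_{3,3}$ is the set of $p\in\Delta_7$ that are a sum of three tensors of the form $a\otimes b\otimes c$ with $a,b,c\in\mathbb{R}^2_{\ge0}$. $\operatorname{RBM}_{3,2}$ is the set of $p\in\Delta_7$ of the form $p=(a_1\otimes b_1\otimes c_1+d_1\otimes e_1\otimes f_1)*(a_2\otimes b_2\otimes c_2+d_2\otimes e_2\otimes f_2)$ with all vectors in $\mathbb{R}^2_{\ge0}$, where $*$ is the entrywise product. The slice determinants are $d_{1,0}=p_{000}p_{011}-p_{001}p_{010}$, $d_{1,1}=p_{100}p_{111}-p_{101}p_{110}$, $d_{2,0}=p_{000}p_{101}-p_{001}p_{100}$, $d_{2,1}=p_{010}p_{111}-p_{011}p_{110}$, $d_{3,0}=p_{000}p_{110}-p_{010}p_{100}$, $d_{3,1}=p_{001}p_{111}-p_{011}p_{101}$. *)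

theory Defs
  imports "HOL-Analysis.Analysis"
begin

text \<open>A 2x2x2 tensor is represented as a function nat => nat => nat => real;
  only the entries with indices in {0,1} are meaningful. Vectors in R^2 are
  functions nat => real, only entries 0 and 1 meaningful.\<close>

type_synonym tensor3 = "nat \<Rightarrow> nat \<Rightarrow> nat \<Rightarrow> real"
type_synonym vec2 = "nat \<Rightarrow> real"

definition idx2 :: "nat set" where "idx2 = {0, 1}"

definition simplex7 :: "tensor3 set" where
  "simplex7 = {p. (\<forall>i\<in>idx2. \<forall>j\<in>idx2. \<forall>k\<in>idx2. p i j k \<ge> 0) \<and>
                  (\<Sum>i\<in>idx2. \<Sum>j\<in>idx2. \<Sum>k\<in>idx2. p i j k) = 1}"

definition nonneg2 :: "vec2 \<Rightarrow> bool" where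
  "nonneg2 a \<longleftrightarrow> a 0 \<ge> 0 \<and> a 1 \<ge> 0"

definition outer3 :: "vec2 \<Rightarrow> vec2 \<Rightarrow> vec2 \<Rightarrow> tensor3" where
  "outer3 a b c = (\<lambda>i j k. a i * b j * c k)"

definition tensor_eq :: "tensor3 \<Rightarrow> tensor3 \<Rightarrow> bool" where
  "tensor_eq p q \<longleftrightarrow> (\<forall>i\<in>idx2. \<forall>j\<in>idx2. \<forall>k\<in>idx2. p i j k = q i j k)"

definition M33 :: "tensor3 set" where
  "M33 = {p \<in> simplex7. \<exists>a b c :: nat \<Rightarrow> vec2.
      (\<forall>r<3. nonneg2 (a r) \<and> nonneg2 (b r) \<and> nonneg2 (c r)) \<and>
      tensor_eq p (\<lambda>i j k. \<Sum>r<3. outer3 (a r) (b r) (c r) i j k)}"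

definition RBM32 :: "tensor3 set" where
  "RBM32 = {p \<in> simplex7. \<exists>a1 b1 c1 d1 e1 f1 a2 b2 c2 d2 e2 f2 :: vec2.
      nonneg2 a1 \<and> nonneg2 b1 \<and> nonneg2 c1 \<and> nonneg2 d1 \<and> nonneg2 e1 \<and> nonneg2 f1 \<and>
      nonneg2 a2 \<and> nonneg2 b2 \<and> nonneg2 c2 \<and> nonneg2 d2 \<and> nonneg2 e2 \<and> nonneg2 f2 \<and>
      tensor_eq p (\<lambda>i j k. (outer3 a1 b1 c1 i j k + outer3 d1 e1 f1 i j k) *
                           (outer3 a2 b2 c2 i j k + outer3 d2 e2 f2 i j k))}"

definition slice_det :: "tensor3 \<Rightarrow> nat \<Rightarrow> nat \<Rightarrow> real" where
  "slice_det p i j =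
    (if i = 1 then p j 0 0 * p j 1 1 - p j 0 1 * p j 1 0
     else if i = 2 then p 0 j 0 * p 1 j 1 - p 0 j 1 * p 1 j 0
     else p 0 0 j * p 1 1 j - p 0 1 j * p 1 0 j)"

lemma slice_det_check:
  "slice_det p 1 0 = p 0 0 0 * p 0 1 1 - p 0 0 1 * p 0 1 0"
  "slice_det p 1 1 = p 1 0 0 * p 1 1 1 - p 1 0 1 * p 1 1 0"
  "slice_det p 2 0 = p 0 0 0 * p 1 0 1 - p 0 0 1 * p 1 0 0"
  "slice_det p 2 1 = p 0 1 0 * p 1 1 1 - p 0 1 1 * p 1 1 0"
  "slice_det p 3 0 = p 0 0 0 * p 1 1 0 - p 0 1 0 * p 1 0 0"
  "slice_det p 3 1 = p 0 0 1 * p 1 1 1 - p 0 1 1 * p 1 0 1"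
  by (simp_all add: slice_det_def)

end

theory Submission
  imports Defs
begin


definition vec :: "real \<Rightarrow> real \<Rightarrow> vec2" where "vec x y = (\<lambda>n. if n = 0 then x else y)"

lemma nonneg_vec[simp]: "nonneg2 (vec x y) \<longleftrightarrow> x \<ge> 0 \<and> y \<ge> 0"
  by (simp add: nonneg2_def vec_def)

lemma vec_simps[simp]: "vec x y 0 = x" "vec x y (Suc 0) = y" by (simp_all add: vec_def)

lemma core:
  fixes p :: tensor3
  assumes S: "p \<in> simplex7"
    and pos: "\<forall>i\<in>idx2. \<forall>j\<in>idx2. \<forall>k\<in>idx2. p i j k > 0"
    and det: "p 0 0 0 * p 0 1 1 = p 0 0 1 * p 0 1 0"
  shows "p \<in> RBM32 \<and> p \<in> M33"
proof -
  have p: "p 0 0 0 > 0" "p 0 0 1 > 0" "p 0 1 0 > 0" "p 0 1 1 > 0"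
     "p 1 0 0 > 0" "p 1 0 1 > 0" "p 1 1 0 > 0" "p 1 1 1 > 0"
    using pos by (auto simp: idx2_def)
  define a where "a = p 1 0 0"
  define b where "b = p 1 0 1"
  define c where "c = p 1 1 0"
  define d where "d = p 1 1 1"
  have abcd: "a > 0" "b > 0" "c > 0" "d > 0" using p by (simp_all add: a_def b_def c_def d_def)
  have den: "b * c + a * d > 0" using abcd by (simp add: add_pos_pos)
  define L where "L = a * b / (b * c + a * d)"
  have L: "L > 0" using abcd by (simp add: L_def add_pos_pos)
  have Lc: "L * c \<le> a"
  proof -
    have "L * c = a * (b * c) / (b * c + a * d)" by (simp add: L_def)
    also have "\<dots> \<le> a" using abcd den by (simp add: divide_le_eq field_simps)
    finally show ?thesis .
  qed
  have Ld: "L * d \<le> b"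
  proof -
    have "L * d = b * (a * d) / (b * c + a * d)" by (simp add: L_def field_simps)
    also have "\<dots> \<le> b" using abcd den by (simp add: divide_le_eq field_simps)
    finally show ?thesis .
  qed
  define h0 where "h0 = (a - L * c) / c"
  define h1 where "h1 = (b - L * d) / d"
  have h: "h0 \<ge> 0" "h1 \<ge> 0" using Lc Ld abcd by (simp_all add: h0_def h1_def)
  have T: "tensor_eq p (\<lambda>i j k. (outer3 (vec 1 1) (vec 1 1) (vec 1 1) i j k
        + outer3 (vec 0 1) (vec (1/L) 0) (vec h0 h1) i j k) *
       (outer3 (vec 1 0) (vec (p 0 0 0) (p 0 1 0)) (vec 1 (p 0 0 1 / p 0 0 0)) i j k
        + outer3 (vec 0 1) (vec L 1) (vec c d) i j k))"
    unfolding tensor_eq_def idx2_def outer3_def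
    using p L abcd det
    by (auto simp: h0_def h1_def a_def b_def c_def d_def field_simps)
  have R: "p \<in> RBM32"
    unfolding RBM32_def using S T L h abcd p
    apply (intro CollectI conjI S)
    apply (rule exI)+
    apply (intro conjI)
    prefer 13 apply (rule T)
    by simp_all
  define A where "A = (\<lambda>r::nat. if r = 0 then vec 1 0 else vec 0 1)"
  define B where "B = (\<lambda>r::nat. if r = 0 then vec (p 0 0 0) (p 0 1 0) else if r = 1 then vec 1 0 else vec 0 1)"
  define C where "C = (\<lambda>r::nat. if r = 0 then vec 1 (p 0 0 1 / p 0 0 0) else if r = 1 then vec a b else vec c d)"
  have "tensor_eq p (\<lambda>i j k. \<Sum>r<3. outer3 (A r) (B r) (C r) i j k)"
    unfolding tensor_eq_def idx2_def outer3_def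
    using p det
    by (auto simp: A_def B_def C_def a_def b_def c_def d_def numeral_3_eq_3 lessThan_Suc field_simps)
  moreover have "\<forall>r<3. nonneg2 (A r) \<and> nonneg2 (B r) \<and> nonneg2 (C r)"
    using p abcd by (auto simp: A_def B_def C_def)
  ultimately have M: "p \<in> M33" unfolding M33_def using S by blast
  show ?thesis using R M by blast
qed


lemma simplex7_iff: "p \<in> simplex7 \<longleftrightarrow> (p 0 0 0 \<ge> 0 \<and> p 0 0 1 \<ge> 0 \<and> p 0 1 0 \<ge> 0 \<and> p 0 1 1 \<ge> 0 \<and>
  p 1 0 0 \<ge> 0 \<and> p 1 0 1 \<ge> 0 \<and> p 1 1 0 \<ge> 0 \<and> p 1 1 1 \<ge> 0 \<and>
  p 0 0 0 + p 0 0 1 + p 0 1 0 + p 0 1 1 + p 1 0 0 + p 1 0 1 + p 1 1 0 + p 1 1 1 = 1)"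
  by (simp add: simplex7_def idx2_def add.assoc)

lemma pos_iff: "(\<forall>i\<in>idx2. \<forall>j\<in>idx2. \<forall>k\<in>idx2. p i j k > 0) \<longleftrightarrow> (p 0 0 0 > 0 \<and> p 0 0 1 > 0 \<and> p 0 1 0 > 0 \<and> p 0 1 1 > 0 \<and>
  p 1 0 0 > 0 \<and> p 1 0 1 > 0 \<and> p 1 1 0 > 0 \<and> p 1 1 1 > 0)"
  by (simp add: idx2_def)

lemma teq_iff: "tensor_eq p q \<longleftrightarrow> (p 0 0 0 = q 0 0 0 \<and> p 0 0 1 = q 0 0 1 \<and> p 0 1 0 = q 0 1 0 \<and> p 0 1 1 = q 0 1 1 \<and>
  p 1 0 0 = q 1 0 0 \<and> p 1 0 1 = q 1 0 1 \<and> p 1 1 0 = q 1 1 0 \<and> p 1 1 1 = q 1 1 1)"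
  by (simp add: tensor_eq_def idx2_def)

lemma RBM_intro:
  assumes "p \<in> simplex7" "nonneg2 a1" "nonneg2 b1" "nonneg2 c1" "nonneg2 d1" "nonneg2 e1" "nonneg2 f1"
      "nonneg2 a2" "nonneg2 b2" "nonneg2 c2" "nonneg2 d2" "nonneg2 e2" "nonneg2 f2"
      "tensor_eq p (\<lambda>i j k. (outer3 a1 b1 c1 i j k + outer3 d1 e1 f1 i j k) *
                           (outer3 a2 b2 c2 i j k + outer3 d2 e2 f2 i j k))"
  shows "p \<in> RBM32"
  unfolding RBM32_def
  apply (intro CollectI conjI assms(1))
  apply (rule exI)+
  apply (intro conjI)
  prefer 13 apply (rule assms(14))
  using assms by simp_all

lemma congr_RBM: assumes "tensor_eq p q" "q \<in> RBM32" shows "p \<in> RBM32"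
proof -
  from assms(2) obtain a1 b1 c1 d1 e1 f1 a2 b2 c2 d2 e2 f2 where
    nn: "nonneg2 a1 \<and> nonneg2 b1 \<and> nonneg2 c1 \<and> nonneg2 d1 \<and> nonneg2 e1 \<and> nonneg2 f1 \<and>
      nonneg2 a2 \<and> nonneg2 b2 \<and> nonneg2 c2 \<and> nonneg2 d2 \<and> nonneg2 e2 \<and> nonneg2 f2" and
    T: "tensor_eq q (\<lambda>i j k. (outer3 a1 b1 c1 i j k + outer3 d1 e1 f1 i j k) *
                           (outer3 a2 b2 c2 i j k + outer3 d2 e2 f2 i j k))" and S: "q \<in> simplex7"
    unfolding RBM32_def by (elim CollectE conjE exE) (rule that; (intro conjI)?; assumption)
  have S': "p \<in> simplex7" using S assms(1) by (simp add: simplex7_iff teq_iff)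
  have T': "tensor_eq p (\<lambda>i j k. (outer3 a1 b1 c1 i j k + outer3 d1 e1 f1 i j k) *
                           (outer3 a2 b2 c2 i j k + outer3 d2 e2 f2 i j k))"
    using T assms(1) by (simp add: teq_iff)
  show ?thesis using nn by (intro RBM_intro[OF S' _ _ _ _ _ _ _ _ _ _ _ _ T']) auto
qed

lemma congr_M: assumes "tensor_eq p q" "q \<in> M33" shows "p \<in> M33"
proof -
  from assms(2) obtain a b c where nn: "\<forall>r<(3::nat). nonneg2 (a r) \<and> nonneg2 (b r) \<and> nonneg2 (c r)" and
    T: "tensor_eq q (\<lambda>i j k. \<Sum>r<(3::nat). outer3 (a r) (b r) (c r) i j k)" and S: "q \<in> simplex7"
    unfolding M33_def by blast
  have S': "p \<in> simplex7" using S assms(1) by (simp add: simplex7_iff teq_iff)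
  have T': "tensor_eq p (\<lambda>i j k. \<Sum>r<(3::nat). outer3 (a r) (b r) (c r) i j k)"
    using T assms(1) by (simp add: teq_iff)
  show ?thesis unfolding M33_def using S' T' nn by blast
qed

definition fl :: "vec2 \<Rightarrow> vec2" where "fl a = (\<lambda>n. a (1 - n))"
lemma nonneg_fl[simp]: "nonneg2 (fl a) = nonneg2 a" by (auto simp: nonneg2_def fl_def)

lemma outer_fl: "i \<in> idx2 \<Longrightarrow> outer3 (fl a) b c i j k = outer3 a b c (1 - i) j k"
  by (simp add: outer3_def fl_def)

lemma F_RBM: assumes "q \<in> RBM32" shows "(\<lambda>i j k. q (1 - i) j k) \<in> RBM32"
proof -
  from assms obtain a1 b1 c1 d1 e1 f1 a2 b2 c2 d2 e2 f2 where
    nn: "nonneg2 a1 \<and> nonneg2 b1 \<and> nonneg2 c1 \<and> nonneg2 d1 \<and> nonneg2 e1 \<and> nonneg2 f1 \<and>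
      nonneg2 a2 \<and> nonneg2 b2 \<and> nonneg2 c2 \<and> nonneg2 d2 \<and> nonneg2 e2 \<and> nonneg2 f2" and
    T: "tensor_eq q (\<lambda>i j k. (outer3 a1 b1 c1 i j k + outer3 d1 e1 f1 i j k) *
                           (outer3 a2 b2 c2 i j k + outer3 d2 e2 f2 i j k))" and S: "q \<in> simplex7"
    unfolding RBM32_def by (elim CollectE conjE exE) (rule that; (intro conjI)?; assumption)
  have T': "tensor_eq (\<lambda>i j k. q (1 - i) j k) (\<lambda>i j k. (outer3 (fl a1) b1 c1 i j k + outer3 (fl d1) e1 f1 i j k) *
                           (outer3 (fl a2) b2 c2 i j k + outer3 (fl d2) e2 f2 i j k))"
    using T unfolding teq_iff outer3_def fl_def by (elim conjE, intro conjI) simp_all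
  have S': "(\<lambda>i j k. q (1 - i) j k) \<in> simplex7" using S unfolding simplex7_iff by (elim conjE, intro conjI) simp_all
  show ?thesis unfolding RBM32_def
    apply (intro CollectI conjI S')
    apply (rule exI)+
    apply (intro conjI)
    prefer 13 apply (rule T')
    using nn by simp_all
qed

lemma F_M: assumes "q \<in> M33" shows "(\<lambda>i j k. q (1 - i) j k) \<in> M33"
proof -
  from assms obtain a b c where nn: "\<forall>r<(3::nat). nonneg2 (a r) \<and> nonneg2 (b r) \<and> nonneg2 (c r)" and
    T: "tensor_eq q (\<lambda>i j k. \<Sum>r<(3::nat). outer3 (a r) (b r) (c r) i j k)" and S: "q \<in> simplex7"
    unfolding M33_def by blast
  have T': "tensor_eq (\<lambda>i j k. q (1 - i) j k) (\<lambda>i j k. \<Sum>r<(3::nat). outer3 (fl (a r)) (b r) (c r) i j k)"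
    using T unfolding teq_iff outer3_def fl_def by (elim conjE, intro conjI) simp_all
  have S': "(\<lambda>i j k. q (1 - i) j k) \<in> simplex7" using S unfolding simplex7_iff by (elim conjE, intro conjI) simp_all
  have nn': "\<forall>r<(3::nat). nonneg2 (fl (a r)) \<and> nonneg2 (b r) \<and> nonneg2 (c r)" using nn by simp
  show ?thesis unfolding M33_def
    apply (intro CollectI conjI S')
    apply (rule exI[where x="\<lambda>r. fl (a r)"], rule exI[where x="b"], rule exI[where x="c"])
    by (rule conjI[OF nn' T'])
qed

lemma S12_RBM: assumes "q \<in> RBM32" shows "(\<lambda>i j k. q j i k) \<in> RBM32"
proof -
  from assms obtain a1 b1 c1 d1 e1 f1 a2 b2 c2 d2 e2 f2 where
    nn: "nonneg2 a1 \<and> nonneg2 b1 \<and> nonneg2 c1 \<and> nonneg2 d1 \<and> nonneg2 e1 \<and> nonneg2 f1 \<and>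
      nonneg2 a2 \<and> nonneg2 b2 \<and> nonneg2 c2 \<and> nonneg2 d2 \<and> nonneg2 e2 \<and> nonneg2 f2" and
    T: "tensor_eq q (\<lambda>i j k. (outer3 a1 b1 c1 i j k + outer3 d1 e1 f1 i j k) *
                           (outer3 a2 b2 c2 i j k + outer3 d2 e2 f2 i j k))" and S: "q \<in> simplex7"
    unfolding RBM32_def by (elim CollectE conjE exE) (rule that; (intro conjI)?; assumption)
  have T': "tensor_eq (\<lambda>i j k. q j i k) (\<lambda>i j k. (outer3 b1 a1 c1 i j k + outer3 e1 d1 f1 i j k) *
                           (outer3 b2 a2 c2 i j k + outer3 e2 d2 f2 i j k))"
    using T unfolding teq_iff outer3_def by (elim conjE, intro conjI) (simp_all add: ac_simps)
  have S': "(\<lambda>i j k. q j i k) \<in> simplex7" using S unfolding simplex7_iff by (elim conjE) (intro conjI; linarith)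
  show ?thesis unfolding RBM32_def
    apply (intro CollectI conjI S')
    apply (rule exI)+
    apply (intro conjI)
    prefer 13 apply (rule T')
    using nn by simp_all
qed

lemma S12_M: assumes "q \<in> M33" shows "(\<lambda>i j k. q j i k) \<in> M33"
proof -
  from assms obtain a b c where nn: "\<forall>r<(3::nat). nonneg2 (a r) \<and> nonneg2 (b r) \<and> nonneg2 (c r)" and
    T: "tensor_eq q (\<lambda>i j k. \<Sum>r<(3::nat). outer3 (a r) (b r) (c r) i j k)" and S: "q \<in> simplex7"
    unfolding M33_def by blast
  have T': "tensor_eq (\<lambda>i j k. q j i k) (\<lambda>i j k. \<Sum>r<(3::nat). outer3 (b r) (a r) (c r) i j k)"
    using T unfolding teq_iff outer3_def by (elim conjE, intro conjI) (simp_all add: ac_simps)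
  have S': "(\<lambda>i j k. q j i k) \<in> simplex7" using S unfolding simplex7_iff by (elim conjE) (intro conjI; linarith)
  have nn': "\<forall>r<(3::nat). nonneg2 (b r) \<and> nonneg2 (a r) \<and> nonneg2 (c r)" using nn by simp
  show ?thesis unfolding M33_def
    apply (intro CollectI conjI S')
    apply (rule exI[where x="b"], rule exI[where x="a"], rule exI[where x="c"])
    by (rule conjI[OF nn' T'])
qed

lemma S13_RBM: assumes "q \<in> RBM32" shows "(\<lambda>i j k. q k j i) \<in> RBM32"
proof -
  from assms obtain a1 b1 c1 d1 e1 f1 a2 b2 c2 d2 e2 f2 where
    nn: "nonneg2 a1 \<and> nonneg2 b1 \<and> nonneg2 c1 \<and> nonneg2 d1 \<and> nonneg2 e1 \<and> nonneg2 f1 \<and>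
      nonneg2 a2 \<and> nonneg2 b2 \<and> nonneg2 c2 \<and> nonneg2 d2 \<and> nonneg2 e2 \<and> nonneg2 f2" and
    T: "tensor_eq q (\<lambda>i j k. (outer3 a1 b1 c1 i j k + outer3 d1 e1 f1 i j k) *
                           (outer3 a2 b2 c2 i j k + outer3 d2 e2 f2 i j k))" and S: "q \<in> simplex7"
    unfolding RBM32_def by (elim CollectE conjE exE) (rule that; (intro conjI)?; assumption)
  have T': "tensor_eq (\<lambda>i j k. q k j i) (\<lambda>i j k. (outer3 c1 b1 a1 i j k + outer3 f1 e1 d1 i j k) *
                           (outer3 c2 b2 a2 i j k + outer3 f2 e2 d2 i j k))"
    using T unfolding teq_iff outer3_def by (elim conjE, intro conjI) (simp_all add: ac_simps)
  have S': "(\<lambda>i j k. q k j i) \<in> simplex7" using S unfolding simplex7_iff by (elim conjE) (intro conjI; linarith)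
  show ?thesis unfolding RBM32_def
    apply (intro CollectI conjI S')
    apply (rule exI)+
    apply (intro conjI)
    prefer 13 apply (rule T')
    using nn by simp_all
qed

lemma S13_M: assumes "q \<in> M33" shows "(\<lambda>i j k. q k j i) \<in> M33"
proof -
  from assms obtain a b c where nn: "\<forall>r<(3::nat). nonneg2 (a r) \<and> nonneg2 (b r) \<and> nonneg2 (c r)" and
    T: "tensor_eq q (\<lambda>i j k. \<Sum>r<(3::nat). outer3 (a r) (b r) (c r) i j k)" and S: "q \<in> simplex7"
    unfolding M33_def by blast
  have T': "tensor_eq (\<lambda>i j k. q k j i) (\<lambda>i j k. \<Sum>r<(3::nat). outer3 (c r) (b r) (a r) i j k)"
    using T unfolding teq_iff outer3_def by (elim conjE, intro conjI) (simp_all add: ac_simps)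
  have S': "(\<lambda>i j k. q k j i) \<in> simplex7" using S unfolding simplex7_iff by (elim conjE) (intro conjI; linarith)
  have nn': "\<forall>r<(3::nat). nonneg2 (c r) \<and> nonneg2 (b r) \<and> nonneg2 (a r)" using nn by simp
  show ?thesis unfolding M33_def
    apply (intro CollectI conjI S')
    apply (rule exI[where x="c"], rule exI[where x="b"], rule exI[where x="a"])
    by (rule conjI[OF nn' T'])
qed

lemma both_F: "q \<in> RBM32 \<and> q \<in> M33 \<Longrightarrow> (\<lambda>i j k. q (1 - i) j k) \<in> RBM32 \<and> (\<lambda>i j k. q (1 - i) j k) \<in> M33"
  using F_RBM F_M by blast
lemma both_S12: "q \<in> RBM32 \<and> q \<in> M33 \<Longrightarrow> (\<lambda>i j k. q j i k) \<in> RBM32 \<and> (\<lambda>i j k. q j i k) \<in> M33"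
  using S12_RBM S12_M by blast
lemma both_S13: "q \<in> RBM32 \<and> q \<in> M33 \<Longrightarrow> (\<lambda>i j k. q k j i) \<in> RBM32 \<and> (\<lambda>i j k. q k j i) \<in> M33"
  using S13_RBM S13_M by blast
lemma both_congr: "tensor_eq p q \<Longrightarrow> q \<in> RBM32 \<and> q \<in> M33 \<Longrightarrow> p \<in> RBM32 \<and> p \<in> M33"
  using congr_RBM congr_M by blast

theorem mainTheorem11:
  fixes p :: tensor3
  assumes "p \<in> simplex7"
    and "\<forall>i\<in>idx2. \<forall>j\<in>idx2. \<forall>k\<in>idx2. p i j k > 0"
    and "\<exists>i\<in>{1,2,3}. \<exists>j\<in>{0,1}. slice_det p i j = 0"
  shows "p \<in> RBM32 \<and> p \<in> M33"
proof -
  have S: "p \<in> simplex7" and P: "\<forall>i\<in>idx2. \<forall>j\<in>idx2. \<forall>k\<in>idx2. p i j k > 0" using assms by auto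
  have cr: "q \<in> RBM32 \<and> q \<in> M33" if "q \<in> simplex7" "\<forall>i\<in>idx2. \<forall>j\<in>idx2. \<forall>k\<in>idx2. q i j k > 0"
     "q 0 0 0 * q 0 1 1 = q 0 0 1 * q 0 1 0" for q using core that by blast
  from assms(3) consider
      "slice_det p 1 0 = 0" | "slice_det p 1 1 = 0" | "slice_det p 2 0 = 0"
    | "slice_det p 2 1 = 0" | "slice_det p 3 0 = 0" | "slice_det p 3 1 = 0" by blast
  then show ?thesis
  proof cases
    case 1 then show ?thesis using cr[OF S P] by (simp add: slice_det_def)
  next
    case 2
    let ?q = "\<lambda>i j k. p (1 - i) j k"
    have "?q \<in> RBM32 \<and> ?q \<in> M33" using 2 S P
      proof (intro cr)
      show "?q \<in> simplex7" using S unfolding simplex7_iff by (simp; linarith)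
      show "\<forall>i\<in>idx2. \<forall>j\<in>idx2. \<forall>k\<in>idx2. ?q i j k > 0" using P unfolding pos_iff by simp
    qed (simp add: slice_det_def)
    from both_F[OF this] show ?thesis by (rule both_congr[rotated]) (simp add: teq_iff)
  next
    case 3
    let ?q = "\<lambda>i j k. p j i k"
    have "?q \<in> RBM32 \<and> ?q \<in> M33" using 3 S P
      proof (intro cr)
      show "?q \<in> simplex7" using S unfolding simplex7_iff by (simp; linarith)
      show "\<forall>i\<in>idx2. \<forall>j\<in>idx2. \<forall>k\<in>idx2. ?q i j k > 0" using P unfolding pos_iff by simp
    qed (simp add: slice_det_def)
    from both_S12[OF this] show ?thesis by (rule both_congr[rotated]) (simp add: teq_iff)
  next
    case 4
    let ?q = "\<lambda>i j k. p j (1 - i) k"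
    have "?q \<in> RBM32 \<and> ?q \<in> M33" using 4 S P
      proof (intro cr)
      show "?q \<in> simplex7" using S unfolding simplex7_iff by (simp; linarith)
      show "\<forall>i\<in>idx2. \<forall>j\<in>idx2. \<forall>k\<in>idx2. ?q i j k > 0" using P unfolding pos_iff by simp
    qed (simp add: slice_det_def)
    from both_S12[OF both_F[OF this]] show ?thesis by (rule both_congr[rotated]) (simp add: teq_iff)
  next
    case 5
    let ?q = "\<lambda>i j k. p k j i"
    have "?q \<in> RBM32 \<and> ?q \<in> M33" using 5 S P
      proof (intro cr)
      show "?q \<in> simplex7" using S unfolding simplex7_iff by (simp; linarith)
      show "\<forall>i\<in>idx2. \<forall>j\<in>idx2. \<forall>k\<in>idx2. ?q i j k > 0" using P unfolding pos_iff by simp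
    qed (simp add: slice_det_def)
    from both_S13[OF this] show ?thesis by (rule both_congr[rotated]) (simp add: teq_iff)
  next
    case 6
    let ?q = "\<lambda>i j k. p k j (1 - i)"
    have "?q \<in> RBM32 \<and> ?q \<in> M33" using 6 S P
      proof (intro cr)
      show "?q \<in> simplex7" using S unfolding simplex7_iff by (simp; linarith)
      show "\<forall>i\<in>idx2. \<forall>j\<in>idx2. \<forall>k\<in>idx2. ?q i j k > 0" using P unfolding pos_iff by simp
    qed (simp add: slice_det_def)
    from both_S13[OF both_F[OF this]] show ?thesis by (rule both_congr[rotated]) (simp add: teq_iff)
  qed
qed
end
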